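(* Let $\varphi$ be a toric plurisubharmonic function with analytic singularities on the unit polydisk $D(0,1)\subseteq\mathbf{C}^n$. Then there exist $c\in\mathbf{R}_{>0}$ and multi-indices $\alpha_1,\dots,\alpha_m\in\mathbf{Z}^n_{\ge0}$ such that $\varphi-\frac{c}{2}\log\left(|z^{\alpha_1}|^2+\cdots+|z^{\alpha_m}|^2\right)$ is bounded near $0$.
   Context: A psh function on $D(0,1)$ is toric if it is invariant under $(z_1,\dots,z_n)\mapsto(e^{i\theta_1}z_1,\dots,e^{i\theta_n}z_n)$ for all real $\theta_j$. A psh function has analytic singularities if locally it is of the form $c\log(|g_1|^2+\cdots+|g_r|^2)+O(1)$ with $c\ge0$ and $g_j$ holomorphic. $z^\alpha=z_1^{\alpha^{(1)}}\cdots z_n^{\alpha^{(n)}}$ for a multi-index $\alpha$. *)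

theory Defs
  imports "HOL-Analysis.Analysis"
begin

text \<open>Points of C^n are vectors of type complex^'n (n = CARD('n)).\<close>

definition unit_polydisk :: "(complex ^ 'n) set" where
  "unit_polydisk = {z. \<forall>i. cmod (z $ i) < 1}"

definition elog :: "real \<Rightarrow> ereal" where
  "elog x = (if x = 0 then -\<infinity> else ereal (ln x))"

definition holo_on :: "(complex ^ 'n) set \<Rightarrow> (complex ^ 'n \<Rightarrow> complex) \<Rightarrow> bool" where
  "holo_on U g \<longleftrightarrow> open U \<and>
     (\<forall>z\<in>U. \<exists>L. (g has_derivative L) (at z) \<and> (\<forall>(c::complex) v. L (c *s v) = c * L v))"

text \<open>Mean value of an upper-bounded extended-real function over the circle
  t \<mapsto> a + e^{it} b, computed with an upper bound M (the result does not depend on M).\<close>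
definition circle_mean_bound ::
  "(complex ^ 'n \<Rightarrow> ereal) \<Rightarrow> complex ^ 'n \<Rightarrow> complex ^ 'n \<Rightarrow> real \<Rightarrow> ereal" where
  "circle_mean_bound \<phi> a b M =
     ereal M - enn2ereal (\<integral>\<^sup>+ t\<in>{0..2*pi}. e2ennreal (ereal M - \<phi> (a + cis t *s b)) \<partial>lborel)
               / ereal (2 * pi)"

definition psh :: "(complex ^ 'n) set \<Rightarrow> (complex ^ 'n \<Rightarrow> ereal) \<Rightarrow> bool" where
  "psh U \<phi> \<longleftrightarrow> open U \<and>
     (\<forall>z\<in>U. \<phi> z < \<infinity>) \<and>
     (\<forall>z\<in>U. Limsup (at z) \<phi> \<le> \<phi> z) \<and>
     (\<exists>z\<in>U. \<phi> z \<noteq> -\<infinity>) \<and>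
     (\<forall>a b. (\<forall>\<zeta>::complex. cmod \<zeta> \<le> 1 \<longrightarrow> a + \<zeta> *s b \<in> U) \<longrightarrow>
        (\<forall>M::real. (\<forall>t. \<phi> (a + cis t *s b) \<le> ereal M) \<longrightarrow> \<phi> a \<le> circle_mean_bound \<phi> a b M))"

definition toric :: "(complex ^ 'n) set \<Rightarrow> (complex ^ 'n \<Rightarrow> ereal) \<Rightarrow> bool" where
  "toric U \<phi> \<longleftrightarrow> (\<forall>\<theta>::'n \<Rightarrow> real. \<forall>z\<in>U. \<phi> (\<chi> i. cis (\<theta> i) * z $ i) = \<phi> z)"

definition analytic_sing :: "(complex ^ 'n) set \<Rightarrow> (complex ^ 'n \<Rightarrow> ereal) \<Rightarrow> bool" where
  "analytic_sing U \<phi> \<longleftrightarrow>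
     (\<forall>x\<in>U. \<exists>V. open V \<and> x \<in> V \<and> V \<subseteq> U \<and>
        (\<exists>c::real. c \<ge> 0 \<and> (\<exists>gs :: (complex ^ 'n \<Rightarrow> complex) list.
           (\<forall>g\<in>set gs. holo_on V g) \<and>
           (\<exists>C::real. \<forall>z\<in>V.
              ereal c * elog (\<Sum>g\<leftarrow>gs. (cmod (g z))\<^sup>2) - ereal C \<le> \<phi> z \<and>
              \<phi> z \<le> ereal c * elog (\<Sum>g\<leftarrow>gs. (cmod (g z))\<^sup>2) + ereal C))))"

definition monomial :: "('n::finite \<Rightarrow> nat) \<Rightarrow> complex ^ 'n \<Rightarrow> complex" where
  "monomial \<alpha> z = (\<Prod>i\<in>UNIV. (z $ i) ^ \<alpha> i)"

end

theory Submission
  imports Defs "HOL-Complex_Analysis.Complex_Analysis"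
begin

no_notation fps_nth (infixl \<open>$\<close> 75)

definition upd :: "'a ^ 'n \<Rightarrow> 'n \<Rightarrow> 'a \<Rightarrow> 'a ^ 'n" where
  "upd x j a = (\<chi> i. if i = j then a else x $ i)"

lemma upd_nth [simp]: "upd x j a $ i = (if i = j then a else x $ i)"
  by (simp add: upd_def)

lemma upd_same [simp]: "upd x j (x $ j) = x"
  by (simp add: upd_def vec_eq_iff)

lemma upd_upd [simp]: "upd (upd x j a) j b = upd x j b"
  by (simp add: upd_def vec_eq_iff)

lemma continuous_on_upd [continuous_intros]:
  fixes f :: "'b::topological_space \<Rightarrow> 'a::topological_space ^ 'n"
  shows "continuous_on S f \<Longrightarrow> continuous_on S g \<Longrightarrow> continuous_on S (\<lambda>x. upd (f x) j (g x))"
  unfolding upd_def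
proof (intro continuous_on_vec_lambda)
  fix i assume "continuous_on S f" "continuous_on S g"
  then show "continuous_on S (\<lambda>x. if i = j then g x else f x $ i)"
    by (cases "i = j") (auto intro!: continuous_intros)
qed

primrec Iint :: "'n list \<Rightarrow> (real ^ 'n \<Rightarrow> complex) \<Rightarrow> real ^ 'n \<Rightarrow> complex" where
  "Iint [] F th = F th"
| "Iint (j # js) F th = integral {0..1} (\<lambda>t. Iint js F (upd th j t))"

lemma Iint_cont:
  fixes F :: "real^'n \<Rightarrow> complex"
  assumes "continuous_on UNIV F"
  shows "continuous_on UNIV (Iint js F)"
proof (induction js)
  case Nil then show ?case using assms by simp
next
  case (Cons j js)
  have c: "continuous_on (UNIV \<times> cbox 0 1) (\<lambda>p. upd (fst p) j (snd p))"
    by (auto intro!: continuous_intros)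
  have "continuous_on (UNIV \<times> cbox 0 1) (\<lambda>p. Iint js F (upd (fst p) j (snd p)))"
    by (rule continuous_on_compose2[OF Cons c]) auto
  then have "continuous_on (UNIV \<times> cbox 0 1) (\<lambda>(x, t). Iint js F (upd x j t))"
    by (simp add: case_prod_unfold)
  from integral_continuous_on_param[OF this] show ?case
    by (simp add: cbox_interval)
qed

lemma Iint_integrable:
  assumes "continuous_on UNIV F"
  shows "(\<lambda>t. Iint js F (upd th j t)) integrable_on {0..1}"
  by (rule integrable_continuous_real, rule continuous_on_compose2[OF Iint_cont[OF assms]])
     (auto intro!: continuous_intros)

lemma Iint_add:
  assumes "continuous_on UNIV F" "continuous_on UNIV G"
  shows "Iint js (\<lambda>x. F x + G x) th = Iint js F th + Iint js G th"
proof (induction js arbitrary: th)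
  case Nil then show ?case by simp
next
  case (Cons j js)
  then show ?case
    by (simp add: integral_add[OF Iint_integrable[OF assms(1)] Iint_integrable[OF assms(2)]])
qed

lemma Iint_mult_const: "Iint js (\<lambda>x. c * F x) th = c * Iint js F th"
  by (induction js arbitrary: th) simp_all

lemma Iint_sum:
  assumes "finite A" "\<And>a. a \<in> A \<Longrightarrow> continuous_on UNIV (F a)"
  shows "Iint js (\<lambda>x. \<Sum>a\<in>A. F a x) th = (\<Sum>a\<in>A. Iint js (F a) th)"
  using assms
proof (induction A rule: finite_induct)
  case empty
  then show ?case by (induction js arbitrary: th) simp_all
next
  case (insert a A)
  then show ?case
    by (simp add: Iint_add continuous_on_sum)
qed

lemma Iint_bound:
  assumes "continuous_on UNIV F" "\<And>x. norm (F x) \<le> B"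
  shows "norm (Iint js F th) \<le> B"
proof (induction js arbitrary: th)
  case Nil then show ?case using assms by simp
next
  case (Cons j js)
  have "norm (integral {0..1} (\<lambda>t. Iint js F (upd th j t))) \<le> B * (1 - 0)"
    by (rule integral_bound) (auto intro!: Cons continuous_on_compose2[OF Iint_cont[OF assms(1)]] continuous_intros)
  then show ?case by simp
qed

lemma Iint_cong:
  fixes F G :: "real^'n \<Rightarrow> complex"
  assumes "\<And>x. (\<forall>i. i \<notin> set js \<longrightarrow> x $ i = th $ i) \<Longrightarrow> F x = G x"
  shows "Iint js F th = Iint js G th"
  using assms
proof (induction js arbitrary: th)
  case Nil then show ?case by simp
next
  case (Cons j js)
  have "Iint js F (upd th j t) = Iint js G (upd th j t)" for t
    by (rule Cons.IH) (use Cons.prems in auto)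
  then show ?case by simp
qed

lemma Iint_factor:
  fixes F :: "real^'n \<Rightarrow> complex"
  assumes "j \<notin> set js"
  shows "Iint js (\<lambda>x. c (x $ j) * F x) th = c (th $ j) * Iint js F th"
  using assms
proof (induction js arbitrary: th)
  case Nil then show ?case by simp
next
  case (Cons i js)
  then show ?case by simp
qed

lemma Iint_tendsto:
  assumes "\<And>n. continuous_on UNIV (F n)" "continuous_on UNIV G"
    "\<And>n x. norm (F n x) \<le> B" "\<And>x. (\<lambda>n. F n x) \<longlonglongrightarrow> G x"
  shows "(\<lambda>n. Iint js (F n) th) \<longlonglongrightarrow> Iint js G th"
proof (induction js arbitrary: th)
  case Nil then show ?case using assms by simp
next
  case (Cons j js)
  show ?case unfolding Iint.simps
    by (rule dominated_convergence(2)[where h="\<lambda>_. B"])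
       (auto intro!: Iint_integrable assms Cons Iint_bound)
qed

definition E :: "real \<Rightarrow> complex" where
  "E t = exp (2 * of_real pi * \<i> * of_real t)"

lemma norm_E [simp]: "norm (E t) = 1"
proof -
  have "E t = exp (\<i> * of_real (2 * pi * t))" by (simp add: E_def mult_ac)
  then show ?thesis by simp
qed

lemma E_nonzero [simp]: "E t \<noteq> 0"
  by (simp add: E_def)

lemma continuous_on_E [continuous_intros]:
  "continuous_on S f \<Longrightarrow> continuous_on S (\<lambda>x. E (f x))"
  unfolding E_def by (auto intro!: continuous_intros)

definition kern :: "real \<Rightarrow> complex \<Rightarrow> real \<Rightarrow> complex" where
  "kern R w t = of_real R * E t / (of_real R * E t - w)"

definition Pc :: "real \<Rightarrow> (complex ^ 'n) set" where
  "Pc R = {z. \<forall>i. cmod (z $ i) \<le> R}"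

definition mix :: "complex ^ 'n \<Rightarrow> 'n set \<Rightarrow> real \<Rightarrow> real ^ 'n \<Rightarrow> complex ^ 'n" where
  "mix z J R th = (\<chi> i. if i \<in> J then of_real R * E (th $ i) else z $ i)"

definition good :: "(complex ^ 'n \<Rightarrow> complex) \<Rightarrow> real \<Rightarrow> bool" where
  "good g R \<longleftrightarrow> continuous_on (Pc R) g \<and>
     (\<forall>w\<in>Pc R. \<forall>j. (\<lambda>\<zeta>. g (upd w j \<zeta>)) holomorphic_on ball 0 R)"

lemma has_integral_cancel:
  fixes c :: complex
  assumes "((\<lambda>t. c * f t) has_integral c * y) S" "c \<noteq> 0"
  shows "(f has_integral y) S"
  using has_integral_mult_right[OF assms(1), of "inverse c"] assms(2)
  by (simp add: mult.assoc[symmetric])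

lemma alg: "(a::complex) / b * (k * d) = k * (a * (d / b))"
  by (simp add: divide_inverse ac_simps)

lemma cauchy1:
  assumes contf: "continuous_on (cball 0 R) h" and holf: "h holomorphic_on ball 0 R"
    and w: "cmod w < R"
  shows "integral {0..1} (\<lambda>t. h (of_real R * E t) * kern R w t) = h w"
proof -
  have "((\<lambda>u. h u/(u-w)) has_contour_integral (2 * of_real pi * \<i> * h w)) (circlepath 0 R)"
    using Cauchy_integral_circlepath[OF contf holf] w by simp
  then have "((\<lambda>t. h (circlepath 0 R t) / (circlepath 0 R t - w) *
        vector_derivative (circlepath 0 R) (at t within {0..1})) has_integral (2 * of_real pi * \<i> * h w)) {0..1}"
    by (simp add: has_contour_integral_def)
  then have "((\<lambda>t. (2 * of_real pi * \<i>) * (h (of_real R * E t) * kern R w t)) has_integral (2 * of_real pi * \<i> * h w)) {0..1}"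
  proof (rule has_integral_eq[rotated])
    fix x :: real assume x: "x \<in> {0..1}"
    have vd: "vector_derivative (circlepath 0 R) (at x within {0..1}) =
          2 * pi * \<i> * R * exp(2 * of_real pi * \<i> * x)"
      using x by (simp add: vector_derivative_circlepath01)
    have ne: "of_real R * E x - w \<noteq> 0"
    proof
      assume "of_real R * E x - w = 0"
      then have "cmod w = cmod (of_real R * E x)" by simp
      also have "\<dots> = \<bar>R\<bar>" by (simp add: norm_mult)
      finally show False using w by simp
    qed
    show "h (circlepath 0 R x) / (circlepath 0 R x - w) * vector_derivative (circlepath 0 R) (at x within {0..1}) =
        2 * complex_of_real pi * \<i> * (h (complex_of_real R * E x) * kern R w x)"
      unfolding vd unfolding circlepath E_def kern_def using alg[of "h (complex_of_real R * exp (2 * complex_of_real pi * \<i> * complex_of_real x))"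
           "complex_of_real R * exp (2 * complex_of_real pi * \<i> * complex_of_real x) - w" "2 * complex_of_real pi * \<i>"
           "complex_of_real R * exp (2 * complex_of_real pi * \<i> * complex_of_real x)"] by simp
  qed
  then have "((\<lambda>t. h (of_real R * E t) * kern R w t) has_integral h w) {0..1}"
    by (rule has_integral_cancel) simp
  then show ?thesis by (rule integral_unique)
qed

lemma good_line:
  assumes "good g R" "w \<in> Pc R"
  shows "continuous_on (cball 0 R) (\<lambda>\<zeta>. g (upd w j \<zeta>))"
    "(\<lambda>\<zeta>. g (upd w j \<zeta>)) holomorphic_on ball 0 R"
proof -
  have "continuous_on (cball 0 R) (\<lambda>\<zeta>. upd w j \<zeta>)"
    by (auto intro!: continuous_intros)
  moreover have "(\<lambda>\<zeta>. upd w j \<zeta>) ` cball 0 R \<subseteq> Pc R"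
    using assms(2) by (auto simp: Pc_def)
  ultimately show "continuous_on (cball 0 R) (\<lambda>\<zeta>. g (upd w j \<zeta>))"
    using assms(1) unfolding good_def by (metis continuous_on_compose2)
  show "(\<lambda>\<zeta>. g (upd w j \<zeta>)) holomorphic_on ball 0 R"
    using assms unfolding good_def by blast
qed

lemma cauchy_multi:
  fixes g :: "complex ^ 'n \<Rightarrow> complex"
  assumes "good g R" "distinct js" "z \<in> Pc R" "\<forall>i\<in>set js. cmod (z $ i) < R"
  shows "Iint js (\<lambda>th. g (mix z (set js) R th) * (\<Prod>i\<in>set js. kern R (z $ i) (th $ i))) th0 = g z"
  using assms(2-4)
proof (induction js arbitrary: z th0)
  case Nil
  have "mix z {} R th0 = z" by (simp add: mix_def vec_eq_iff)
  then show ?case by simp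
next
  case (Cons j js)
  let ?J = "set js"
  have jn: "j \<notin> ?J" and dj: "distinct js" using Cons.prems by auto
  have R0: "R > 0" using Cons.prems by (auto intro: le_less_trans[OF norm_ge_zero])
  have "Iint js (\<lambda>th. g (mix z (set (j # js)) R th) * (\<Prod>i\<in>set (j # js). kern R (z $ i) (th $ i))) (upd th0 j t)
      = kern R (z $ j) t * g (upd z j (of_real R * E t))" for t
  proof -
    have "Iint js (\<lambda>th. g (mix z (set (j # js)) R th) * (\<Prod>i\<in>set (j # js). kern R (z $ i) (th $ i))) (upd th0 j t)
        = Iint js (\<lambda>th. kern R (z $ j) (th $ j) * (g (mix z (insert j ?J) R th) * (\<Prod>i\<in>?J. kern R (z $ i) (th $ i)))) (upd th0 j t)"
      using jn by (simp add: mult_ac)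
    also have "\<dots> = kern R (z $ j) t * Iint js (\<lambda>th. g (mix z (insert j ?J) R th) * (\<Prod>i\<in>?J. kern R (z $ i) (th $ i))) (upd th0 j t)"
      using Iint_factor[OF jn, where c="kern R (z $ j)" and F="\<lambda>th. g (mix z (insert j ?J) R th) * (\<Prod>i\<in>?J. kern R (z $ i) (th $ i))"] by simp
    also have "Iint js (\<lambda>th. g (mix z (insert j ?J) R th) * (\<Prod>i\<in>?J. kern R (z $ i) (th $ i))) (upd th0 j t)
        = Iint js (\<lambda>th. g (mix (upd z j (of_real R * E t)) ?J R th) * (\<Prod>i\<in>?J. kern R (upd z j (of_real R * E t) $ i) (th $ i))) (upd th0 j t)"
    proof (rule Iint_cong)
      fix x :: "real ^ 'n"
      assume "\<forall>i. i \<notin> ?J \<longrightarrow> x $ i = upd th0 j t $ i"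
      then have xj: "x $ j = t" using jn by auto
      have "mix z (insert j ?J) R x = mix (upd z j (of_real R * E t)) ?J R x"
        using xj by (auto simp: mix_def vec_eq_iff)
      moreover have "(\<Prod>i\<in>?J. kern R (z $ i) (x $ i)) = (\<Prod>i\<in>?J. kern R (upd z j (of_real R * E t) $ i) (x $ i))"
        using jn by (intro prod.cong) auto
      ultimately show "g (mix z (insert j ?J) R x) * (\<Prod>i\<in>?J. kern R (z $ i) (x $ i)) =
         g (mix (upd z j (of_real R * E t)) ?J R x) * (\<Prod>i\<in>?J. kern R (upd z j (of_real R * E t) $ i) (x $ i))"
        by simp
    qed
    also have "\<dots> = g (upd z j (of_real R * E t))"
      by (rule Cons.IH) (use dj Cons.prems R0 jn in \<open>auto simp: Pc_def norm_mult\<close>)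
    finally show ?thesis .
  qed
  then have "Iint (j # js) (\<lambda>th. g (mix z (set (j # js)) R th) * (\<Prod>i\<in>set (j # js). kern R (z $ i) (th $ i))) th0
      = integral {0..1} (\<lambda>t. kern R (z $ j) t * g (upd z j (of_real R * E t)))"
    by (simp only: Iint.simps)
  also have "\<dots> = integral {0..1} (\<lambda>t. g (upd z j (of_real R * E t)) * kern R (z $ j) t)"
    by (simp only: mult.commute)
  also have "\<dots> = g (upd z j (z $ j))"
    using cauchy1[OF good_line(1)[OF assms(1) Cons.prems(2), where j=j] good_line(2)[OF assms(1) Cons.prems(2), where j=j], where w="z $ j"] Cons.prems by simp
  finally show ?case by simp
qed

lemma E_pow_cnj:
  "E t ^ a * cnj (E t) ^ b = exp ((2 * of_real pi * \<i> * of_int (int a - int b)) * of_real t)"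
proof -
  have "E t ^ a = exp (of_nat a * (2 * of_real pi * \<i> * of_real t))"
    unfolding E_def by (rule exp_of_nat_mult[symmetric])
  moreover have "cnj (E t) ^ b = exp (of_nat b * (- (2 * of_real pi * \<i> * of_real t)))"
    unfolding E_def exp_cnj by (subst exp_of_nat_mult) simp
  ultimately show ?thesis
    by (simp add: exp_add[symmetric] algebra_simps)
qed

lemma int_E_pow:
  "integral {0..1} (\<lambda>t. E t ^ a * cnj (E t) ^ b) = (if a = b then 1 else 0)"
proof (cases "a = b")
  case True
  then have "(\<lambda>t. E t ^ a * cnj (E t) ^ b) = (\<lambda>t. 1)"
    by (simp add: E_pow_cnj)
  then show ?thesis using True by simp
next
  case False
  define c where "c = 2 * of_real pi * \<i> * (of_int (int a - int b) :: complex)"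
  have c0: "c \<noteq> 0" using False by (simp add: c_def)
  have "((\<lambda>t. exp (c * of_real t)) has_integral ((\<lambda>u. exp (c * u) / c) (of_real 1) - (\<lambda>u. exp (c * u) / c) (of_real 0))) {0..1}"
  proof (rule fundamental_theorem_of_calculus)
    fix x :: real
    have "((\<lambda>u. exp (c * u) / c) has_field_derivative exp (c * of_real x)) (at (of_real x))"
      using c0 by (auto intro!: derivative_eq_intros)
    then show "((\<lambda>t. (\<lambda>u. exp (c * u) / c) (of_real t)) has_vector_derivative exp (c * of_real x)) (at x within {0..1})"
      by (rule has_vector_derivative_real_field)
  qed simp
  moreover have "exp c = 1"
    unfolding c_def using exp_integer_2pi[of "of_int (int a - int b)"]
    by (simp add: mult_ac)
  ultimately have "((\<lambda>t. exp (c * of_real t)) has_integral 0) {0..1}"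
    by simp
  then show ?thesis using False
    by (simp add: E_pow_cnj c_def integral_unique)
qed

lemma Iint_prod:
  fixes f :: "'n::finite \<Rightarrow> real \<Rightarrow> complex"
  assumes "distinct js"
  shows "Iint js (\<lambda>th. \<Prod>i\<in>set js. f i (th $ i)) th0 = (\<Prod>i\<in>set js. integral {0..1} (f i))"
  using assms
proof (induction js arbitrary: th0)
  case Nil then show ?case by simp
next
  case (Cons j js)
  then have jn: "j \<notin> set js" by simp
  have "Iint js (\<lambda>th. \<Prod>i\<in>set (j # js). f i (th $ i)) (upd th0 j t) = f j t * (\<Prod>i\<in>set js. integral {0..1} (f i))" for t
    using Iint_factor[OF jn, where c="f j" and F="\<lambda>th. \<Prod>i\<in>set js. f i (th $ i)"] Cons jn by simp
  then show ?case using jn by simp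
qed

definition js0 :: "'n::finite list" where
  "js0 = (SOME js. distinct js \<and> set js = UNIV)"

lemma js0: "distinct (js0 :: 'n::finite list)" "set (js0 :: 'n list) = UNIV"
proof -
  have "\<exists>js. distinct js \<and> set js = (UNIV :: 'n set)"
    using finite_distinct_list[of "UNIV :: 'n set"] by auto
  then show "distinct (js0 :: 'n::finite list)" "set (js0 :: 'n list) = UNIV"
    unfolding js0_def by (metis (mono_tags, lifting) someI_ex)+
qed

lemma Iint_prod_UNIV:
  fixes f :: "'n::finite \<Rightarrow> real \<Rightarrow> complex"
  shows "Iint js0 (\<lambda>th. \<Prod>i\<in>UNIV. f i (th $ i)) th0 = (\<Prod>i\<in>UNIV. integral {0..1} (f i))"
  using Iint_prod[OF js0(1), of f th0] by (simp add: js0(2))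

lemma Iint_orth:
  "Iint js0 (\<lambda>th. \<Prod>i\<in>UNIV. E (th $ i) ^ a i * cnj (E (th $ i)) ^ b i) th0 = (if a = b then 1 else 0)"
proof -
  have "Iint js0 (\<lambda>th. \<Prod>i\<in>UNIV. E (th $ i) ^ a i * cnj (E (th $ i)) ^ b i) th0
      = (\<Prod>i\<in>UNIV. (if a i = b i then 1 else 0))"
    using Iint_prod_UNIV[of "\<lambda>i t. E t ^ a i * cnj (E t) ^ b i" th0] by (simp add: int_E_pow)
  also have "\<dots> = (if a = b then 1 else 0)"
    by (auto simp: fun_eq_iff)
  finally show ?thesis .
qed

definition mbox :: "nat \<Rightarrow> ('n \<Rightarrow> nat) set" where
  "mbox N = PiE UNIV (\<lambda>_. {..N})"

lemma finite_mbox [simp]: "finite (mbox N :: ('n::finite \<Rightarrow> nat) set)"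
  unfolding mbox_def by (rule finite_PiE) auto

lemma mem_mbox: "\<alpha> \<in> mbox N \<longleftrightarrow> (\<forall>i. \<alpha> i \<le> N)"
  unfolding mbox_def by (auto simp: PiE_iff)

definition tor :: "real \<Rightarrow> real ^ 'n \<Rightarrow> complex ^ 'n" where
  "tor R th = mix 0 UNIV R th"

lemma tor_nth [simp]: "tor R th $ i = of_real R * E (th $ i)"
  by (simp add: tor_def mix_def)

lemma tor_in: "R \<ge> 0 \<Longrightarrow> tor R th \<in> Pc R"
  by (simp add: Pc_def norm_mult)

lemma continuous_on_tor [continuous_intros]:
  "continuous_on S f \<Longrightarrow> continuous_on S (\<lambda>x. tor R (f x))"
  unfolding tor_def mix_def by (auto intro!: continuous_intros)

lemma good_cont_tor:
  assumes "good g R" "R \<ge> 0"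
  shows "continuous_on UNIV (\<lambda>th. g (tor R th))"
  by (rule continuous_on_compose2[of "Pc R" g]) (use assms tor_in in \<open>auto simp: good_def intro!: continuous_intros\<close>)

lemma norm_le_l1_vec: "norm (x :: 'a::real_normed_vector ^ 'n) \<le> (\<Sum>i\<in>UNIV. norm (x $ i))"
  by (simp add: norm_vec_def L2_set_le_sum)

lemma closed_Pc: "closed (Pc R :: (complex ^ 'n) set)"
  unfolding Pc_def by (simp add: Collect_all_eq closed_INT closed_Collect_le continuous_on_component continuous_on_norm continuous_on_id)

lemma bounded_Pc: "bounded (Pc R :: (complex ^ 'n) set)"
  unfolding bounded_iff
proof (intro exI ballI)
  fix x :: "complex ^ 'n" assume "x \<in> Pc R"
  have "(\<Sum>i\<in>UNIV. cmod (x $ i)) \<le> of_nat (card (UNIV :: 'n set)) * R"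
    by (rule sum_bounded_above) (use \<open>x \<in> Pc R\<close> in \<open>simp add: Pc_def\<close>)
  then show "norm x \<le> real CARD('n) * R" using norm_le_l1_vec[of x] by linarith
qed

lemma compact_Pc: "compact (Pc R :: (complex ^ 'n) set)"
  using compact_eq_bounded_closed bounded_Pc closed_Pc by blast

lemma good_bound:
  fixes g :: "complex ^ 'n \<Rightarrow> complex"
  assumes "good g R"
  obtains B where "B \<ge> 0" "\<And>w::complex^'n. w \<in> Pc R \<Longrightarrow> norm (g w) \<le> B"
proof -
  have "compact (g ` Pc R)"
    using assms compact_Pc by (auto simp: good_def intro: compact_continuous_image)
  then obtain B where B: "\<forall>x\<in>g ` Pc R. norm x \<le> B"
    using compact_imp_bounded bounded_iff by metis
  show ?thesis
  proof (rule that[of "max B 0"])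
    fix w :: "complex ^ 'n" assume "w \<in> Pc R"
    then show "norm (g w) \<le> max B 0" using B by fastforce
  qed simp
qed

lemma E_cnj: "E t * cnj (E t) = 1"
  using complex_norm_square[of "E t"] by simp

lemma kern_alt:
  assumes "R > 0" "cmod w < R"
  shows "kern R w t = 1 / (1 - w / of_real R * cnj (E t))"
proof -
  have ne: "of_real R * E t - w \<noteq> 0"
  proof
    assume "of_real R * E t - w = 0"
    then have "cmod w = cmod (of_real R * E t)" by simp
    also have "\<dots> = R" using assms by (simp add: norm_mult)
    finally show False using assms by simp
  qed
  have "(1 - w / of_real R * cnj (E t)) * (of_real R * E t) = of_real R * E t - w * (E t * cnj (E t))"
    using assms by (simp add: field_simps)
  also have "\<dots> = of_real R * E t - w" by (simp add: E_cnj)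
  finally have eq: "(1 - w / of_real R * cnj (E t)) * (of_real R * E t) = of_real R * E t - w" .
  show ?thesis
    unfolding kern_def using ne assms
    by (simp add: eq[symmetric])
qed

lemma geom_half_bound:
  assumes "cmod q \<le> 1/2"
  shows "cmod (\<Sum>m\<in>{..N}. q ^ m) \<le> 2"
proof -
  have "cmod (\<Sum>m\<in>{..N}. q ^ m) \<le> (\<Sum>m\<in>{..N}. (1/2::real) ^ m)"
    by (rule order_trans[OF norm_sum sum_mono]) (use assms in \<open>auto simp: norm_power intro: power_mono\<close>)
  also have "\<dots> \<le> (\<Sum>m. (1/2::real) ^ m)"
    by (rule sum_le_suminf) (auto intro: summable_geometric)
  also have "\<dots> = 2" using suminf_geometric[of "1/2::real"] by simp
  finally show ?thesis .
qed

lemma kern_series: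
  assumes "R > 0" "cmod w \<le> R / 2"
  shows "(\<lambda>N. \<Sum>m\<in>{..N}. (w / of_real R * cnj (E t)) ^ m) \<longlonglongrightarrow> kern R w t"
proof -
  let ?q = "w / of_real R * cnj (E t)"
  have q: "cmod ?q \<le> 1/2"
    using assms by (simp add: norm_mult norm_divide field_simps)
  then have "cmod ?q < 1" by simp
  then have "(\<lambda>n. ?q ^ n) sums (1 / (1 - ?q))" by (rule geometric_sums)
  then have "(\<lambda>n. \<Sum>m<Suc n. ?q ^ m) \<longlonglongrightarrow> 1 / (1 - ?q)"
    unfolding sums_def by (rule LIMSEQ_Suc)
  moreover have "kern R w t = 1 / (1 - ?q)"
    using assms by (intro kern_alt) auto
  ultimately show ?thesis by (simp add: lessThan_Suc_atMost)
qed

definition coef :: "(complex ^ 'n \<Rightarrow> complex) \<Rightarrow> real \<Rightarrow> ('n::finite \<Rightarrow> nat) \<Rightarrow> complex" where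
  "coef g R \<alpha> = (\<Prod>i\<in>UNIV. (1 / of_real R) ^ \<alpha> i) *
     Iint js0 (\<lambda>th. g (tor R th) * (\<Prod>i\<in>UNIV. cnj (E (th $ i)) ^ \<alpha> i)) 0"

lemma coef_bound:
  assumes "good g R" "R > 0" "\<And>w. w \<in> Pc R \<Longrightarrow> norm (g w) \<le> B"
  shows "norm (coef g R \<alpha>) \<le> B * (\<Prod>i\<in>UNIV. (1 / R) ^ \<alpha> i)"
proof -
  have "norm (Iint js0 (\<lambda>th. g (tor R th) * (\<Prod>i\<in>UNIV. cnj (E (th $ i)) ^ \<alpha> i)) 0) \<le> B"
  proof (rule Iint_bound)
    show "continuous_on UNIV (\<lambda>th. g (tor R th) * (\<Prod>i\<in>UNIV. cnj (E (th $ i)) ^ \<alpha> i))"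
      using good_cont_tor[OF assms(1)] assms(2) by (auto intro!: continuous_intros)
    fix x
    show "norm (g (tor R x) * (\<Prod>i\<in>UNIV. cnj (E (x $ i)) ^ \<alpha> i)) \<le> B"
      using assms(3)[OF tor_in[of R x]] assms(2) by (simp add: norm_mult prod_norm[symmetric] norm_power)
  qed
  moreover have "norm (\<Prod>i\<in>UNIV. (1 / of_real R :: complex) ^ \<alpha> i) = (\<Prod>i\<in>UNIV. (1 / R) ^ \<alpha> i)"
    using assms(2) by (simp add: prod_norm[symmetric] norm_power norm_divide)
  moreover have "(\<Prod>i\<in>UNIV. (1 / R) ^ \<alpha> i) \<ge> 0"
    using assms(2) by (simp add: prod_nonneg)
  ultimately have "(\<Prod>i\<in>UNIV. (1 / R) ^ \<alpha> i) * norm (Iint js0 (\<lambda>th. g (tor R th) * (\<Prod>i\<in>UNIV. cnj (E (th $ i)) ^ \<alpha> i)) 0)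
     \<le> (\<Prod>i\<in>UNIV. (1 / R) ^ \<alpha> i) * B"
    by (intro mult_left_mono) auto
  then show ?thesis
    unfolding coef_def norm_mult \<open>norm (\<Prod>i\<in>UNIV. (1 / of_real R :: complex) ^ \<alpha> i) = (\<Prod>i\<in>UNIV. (1 / R) ^ \<alpha> i)\<close>
    by (simp only: mult.commute)
qed

lemma mix_UNIV: "mix z UNIV R th = tor R th"
  by (simp add: tor_def mix_def)

lemma prod_sum_box:
  fixes f :: "'n::finite \<Rightarrow> nat \<Rightarrow> complex"
  shows "(\<Prod>i\<in>UNIV. \<Sum>m\<in>{..N}. f i m) = (\<Sum>\<alpha>\<in>mbox N. \<Prod>i\<in>UNIV. f i (\<alpha> i))"
  unfolding mbox_def by (rule prod_sum_PiE) auto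

lemma expansion:
  fixes g :: "complex ^ 'n \<Rightarrow> complex"
  assumes gd: "good g R" and R: "R > 0" and z: "z \<in> Pc (R/2)"
  shows "(\<lambda>N. \<Sum>\<alpha>\<in>mbox N. coef g R \<alpha> * monomial \<alpha> z) \<longlonglongrightarrow> g z"
proof -
  obtain B where B0: "B \<ge> 0" and B: "\<And>w. w \<in> Pc R \<Longrightarrow> norm (g w) \<le> B"
    using good_bound[OF gd] by blast
  have zR: "\<And>i. cmod (z $ i) \<le> R/2" using z by (simp add: Pc_def)
  have zPc: "z \<in> Pc R" unfolding Pc_def
  proof (intro CollectI allI)
    fix i show "cmod (z $ i) \<le> R" using zR[of i] R by linarith
  qed
  have zlt: "cmod (z $ i) < R" for i using zR[of i] R by linarith
  define K where "K th = (\<Prod>i\<in>UNIV. kern R (z $ i) (th $ i))" for th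
  define F where "F N th = g (tor R th) * (\<Prod>i\<in>UNIV. \<Sum>m\<in>{..N}. (z $ i / of_real R * cnj (E (th $ i))) ^ m)" for N th
  have "Iint js0 (\<lambda>th. g (mix z (set js0) R th) * (\<Prod>i\<in>set js0. kern R (z $ i) (th $ i))) 0 = g z"
    by (rule cauchy_multi[OF gd js0(1) zPc]) (use zlt in auto)
  then have gz: "Iint js0 (\<lambda>th. g (tor R th) * K th) 0 = g z"
    by (simp add: js0(2) mix_UNIV K_def)
  have ne: "of_real R * E t - z $ i \<noteq> 0" for t i
  proof
    assume "of_real R * E t - z $ i = 0"
    then have "cmod (z $ i) = cmod (of_real R * E t)" by simp
    also have "\<dots> = R" using R by (simp add: norm_mult)
    finally show False using zR[of i] R by simp
  qed
  have gcont: "continuous_on UNIV (\<lambda>th. g (tor R th))"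
    using good_cont_tor[OF gd] R by simp
  have contK: "continuous_on UNIV (\<lambda>th. g (tor R th) * K th)"
    unfolding K_def kern_def using gcont ne by (auto intro!: continuous_intros)
  have contF: "continuous_on UNIV (F N)" for N
    unfolding F_def using gcont R by (auto intro!: continuous_intros)
  have q: "cmod (z $ i / of_real R * cnj (E t)) \<le> 1/2" for i t
    using zR[of i] R by (simp add: norm_mult norm_divide field_simps)
  have bndF: "norm (F N th) \<le> B * 2 ^ CARD('n)" for N th
  proof -
    have "norm (F N th) = norm (g (tor R th)) * (\<Prod>i\<in>UNIV. norm (\<Sum>m\<in>{..N}. (z $ i / of_real R * cnj (E (th $ i))) ^ m))"
      unfolding F_def norm_mult prod_norm ..
    also have "\<dots> \<le> B * (\<Prod>i\<in>(UNIV::'n set). 2)"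
      by (intro mult_mono prod_mono conjI B tor_in geom_half_bound q) (use R B0 in \<open>auto intro: prod_nonneg\<close>)
    finally show ?thesis by simp
  qed
  have limF: "(\<lambda>N. F N th) \<longlonglongrightarrow> g (tor R th) * K th" for th
    unfolding F_def K_def
    by (intro tendsto_mult_left tendsto_prod kern_series R zR)
  have lim: "(\<lambda>N. Iint js0 (F N) 0) \<longlonglongrightarrow> g z"
    using Iint_tendsto[OF contF contK bndF limF, of js0 0] gz by simp
  define H where "H \<alpha> th = g (tor R th) * (\<Prod>i\<in>UNIV. cnj (E (th $ i)) ^ \<alpha> i)" for \<alpha> th
  have contH: "continuous_on UNIV (H \<alpha>)" for \<alpha>
    unfolding H_def using gcont by (auto intro!: continuous_intros)
  have Feq: "F N = (\<lambda>th. \<Sum>\<alpha>\<in>mbox N. (\<Prod>i\<in>UNIV. (z $ i / of_real R) ^ \<alpha> i) * H \<alpha> th)" for N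
  proof
    fix th
    have "F N th = g (tor R th) * (\<Sum>\<alpha>\<in>mbox N. \<Prod>i\<in>UNIV. (z $ i / of_real R * cnj (E (th $ i))) ^ \<alpha> i)"
      unfolding F_def prod_sum_box ..
    also have "\<dots> = (\<Sum>\<alpha>\<in>mbox N. (\<Prod>i\<in>UNIV. (z $ i / of_real R) ^ \<alpha> i) * H \<alpha> th)"
      unfolding H_def sum_distrib_left power_mult_distrib prod.distrib
      by (simp add: mult_ac)
    finally show "F N th = (\<Sum>\<alpha>\<in>mbox N. (\<Prod>i\<in>UNIV. (z $ i / of_real R) ^ \<alpha> i) * H \<alpha> th)" .
  qed
  have "Iint js0 (F N) 0 = (\<Sum>\<alpha>\<in>mbox N. coef g R \<alpha> * monomial \<alpha> z)" for N
  proof -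
    have "Iint js0 (F N) 0 = (\<Sum>\<alpha>\<in>mbox N. Iint js0 (\<lambda>th. (\<Prod>i\<in>UNIV. (z $ i / of_real R) ^ \<alpha> i) * H \<alpha> th) 0)"
      unfolding Feq by (rule Iint_sum) (auto intro!: continuous_intros contH)
    also have "\<dots> = (\<Sum>\<alpha>\<in>mbox N. (\<Prod>i\<in>UNIV. (z $ i / of_real R) ^ \<alpha> i) * Iint js0 (H \<alpha>) 0)"
      by (simp add: Iint_mult_const)
    also have "\<dots> = (\<Sum>\<alpha>\<in>mbox N. coef g R \<alpha> * monomial \<alpha> z)"
    proof (rule sum.cong[OF refl])
      fix \<alpha> :: "'n \<Rightarrow> nat"
      have "(\<Prod>i\<in>UNIV. (z $ i / of_real R) ^ \<alpha> i) = (\<Prod>i\<in>UNIV. (1 / of_real R) ^ \<alpha> i) * monomial \<alpha> z"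
        unfolding monomial_def prod.distrib[symmetric] power_mult_distrib[symmetric]
        by (simp add: field_simps)
      then show "(\<Prod>i\<in>UNIV. (z $ i / of_real R) ^ \<alpha> i) * Iint js0 (H \<alpha>) 0 = coef g R \<alpha> * monomial \<alpha> z"
        unfolding coef_def H_def by (simp add: mult_ac)
    qed
    finally show ?thesis .
  qed
  then show ?thesis using lim by simp
qed

definition rot :: "real ^ 'n \<Rightarrow> complex ^ 'n \<Rightarrow> complex ^ 'n" where
  "rot th z = (\<chi> i. E (th $ i) * z $ i)"

lemma rot_nth [simp]: "rot th z $ i = E (th $ i) * z $ i"
  by (simp add: rot_def)

lemma rot_Pc: "z \<in> Pc R \<Longrightarrow> rot th z \<in> Pc R"
  by (simp add: Pc_def norm_mult)

lemma continuous_on_rot [continuous_intros]: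
  "continuous_on S f \<Longrightarrow> continuous_on S (\<lambda>x. rot (f x) z)"
  unfolding rot_def by (auto intro!: continuous_intros)

lemma Pc_half: "R > 0 \<Longrightarrow> Pc (R/2) \<subseteq> Pc R"
  unfolding Pc_def by (auto intro: order_trans[of _ "R/2"])

lemma prod_sum_box_gen:
  fixes f :: "'n::finite \<Rightarrow> nat \<Rightarrow> 'a::comm_semiring_1"
  shows "(\<Prod>i\<in>UNIV. \<Sum>m\<in>{..N}. f i m) = (\<Sum>\<alpha>\<in>mbox N. \<Prod>i\<in>UNIV. f i (\<alpha> i))"
  unfolding mbox_def by (rule prod_sum_PiE) auto

lemma half_box_bound: "(\<Sum>\<alpha>\<in>mbox N. \<Prod>i\<in>(UNIV::'n::finite set). (1/2::real) ^ \<alpha> i) \<le> 2 ^ CARD('n)"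
proof -
  have "(\<Sum>\<alpha>\<in>mbox N. \<Prod>i\<in>(UNIV::'n set). (1/2::real) ^ \<alpha> i) = (\<Prod>i\<in>(UNIV::'n set). \<Sum>m\<in>{..N}. (1/2::real) ^ m)"
    by (rule prod_sum_box_gen[symmetric])
  also have "\<dots> \<le> (\<Prod>i\<in>(UNIV::'n set). 2)"
  proof (rule prod_mono)
    fix i :: 'n
    have "(\<Sum>m\<in>{..N}. (1/2::real) ^ m) \<le> (\<Sum>m. (1/2::real) ^ m)"
      by (rule sum_le_suminf) (auto intro: summable_geometric)
    also have "\<dots> = 2" using suminf_geometric[of "1/2::real"] by simp
    finally show "0 \<le> (\<Sum>m\<in>{..N}. (1/2::real) ^ m) \<and> (\<Sum>m\<in>{..N}. (1/2::real) ^ m) \<le> 2"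
      by (auto intro: sum_nonneg)
  qed
  finally show ?thesis by simp
qed

lemma norm_monomial: "norm (monomial \<alpha> z) = (\<Prod>i\<in>UNIV. cmod (z $ i) ^ \<alpha> i)"
  by (simp add: monomial_def prod_norm[symmetric] norm_power)

lemma coef_mono_bound:
  fixes g :: "complex ^ 'n \<Rightarrow> complex"
  assumes gd: "good g R" and R: "R > 0" and B: "\<And>w. w \<in> Pc R \<Longrightarrow> norm (g w) \<le> B"
  shows "norm (coef g R \<alpha> * monomial \<alpha> z) \<le> B * (\<Prod>i\<in>UNIV. (cmod (z $ i) / R) ^ \<alpha> i)"
proof -
  have "norm (coef g R \<alpha> * monomial \<alpha> z) \<le> B * (\<Prod>i\<in>UNIV. (1 / R) ^ \<alpha> i) * norm (monomial \<alpha> z)"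
    unfolding norm_mult by (rule mult_right_mono[OF coef_bound[OF gd R B]]) auto
  also have "\<dots> = B * (\<Prod>i\<in>UNIV. (cmod (z $ i) / R) ^ \<alpha> i)"
    unfolding norm_monomial mult.assoc prod.distrib[symmetric] power_mult_distrib[symmetric]
    by simp
  finally show ?thesis .
qed

lemma partial_bound:
  fixes g :: "complex ^ 'n \<Rightarrow> complex"
  assumes gd: "good g R" and R: "R > 0" and B: "\<And>w. w \<in> Pc R \<Longrightarrow> norm (g w) \<le> B" and B0: "B \<ge> 0"
    and w: "w \<in> Pc (R/2)"
  shows "norm (\<Sum>\<alpha>\<in>mbox N. coef g R \<alpha> * monomial \<alpha> w) \<le> B * 2 ^ CARD('n)"
proof -
  have "norm (\<Sum>\<alpha>\<in>mbox N. coef g R \<alpha> * monomial \<alpha> w) \<le> (\<Sum>\<alpha>\<in>mbox N. B * (\<Prod>i\<in>UNIV. (cmod (w $ i) / R) ^ \<alpha> i))"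
    by (rule order_trans[OF norm_sum sum_mono]) (rule coef_mono_bound[OF gd R B])
  also have "\<dots> \<le> (\<Sum>\<alpha>\<in>mbox N. B * (\<Prod>i\<in>(UNIV::'n set). (1/2) ^ \<alpha> i))"
  proof (rule sum_mono)
    fix \<alpha> :: "'n \<Rightarrow> nat"
    have "(\<Prod>i\<in>UNIV. (cmod (w $ i) / R) ^ \<alpha> i) \<le> (\<Prod>i\<in>(UNIV::'n set). (1/2) ^ \<alpha> i)"
    proof (rule prod_mono)
      fix i
      have "cmod (w $ i) / R \<le> 1/2" using w R by (simp add: Pc_def field_simps)
      then show "0 \<le> (cmod (w $ i) / R) ^ \<alpha> i \<and> (cmod (w $ i) / R) ^ \<alpha> i \<le> (1/2) ^ \<alpha> i"
        using R by (auto intro: power_mono)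
    qed
    then show "B * (\<Prod>i\<in>UNIV. (cmod (w $ i) / R) ^ \<alpha> i) \<le> B * (\<Prod>i\<in>(UNIV::'n set). (1/2) ^ \<alpha> i)"
      by (rule mult_left_mono) (rule B0)
  qed
  also have "\<dots> = B * (\<Sum>\<alpha>\<in>mbox N. \<Prod>i\<in>(UNIV::'n set). (1/2) ^ \<alpha> i)"
    by (simp add: sum_distrib_left)
  also have "\<dots> \<le> B * 2 ^ CARD('n)"
    by (intro mult_left_mono half_box_bound B0)
  finally show ?thesis .
qed

lemma monomial_rot: "monomial \<alpha> (rot th z) = monomial \<alpha> z * (\<Prod>i\<in>UNIV. E (th $ i) ^ \<alpha> i)"
  by (simp add: monomial_def power_mult_distrib prod.distrib mult_ac)

lemma continuous_on_monomial [continuous_intros]: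
  "continuous_on S f \<Longrightarrow> continuous_on S (\<lambda>x. monomial \<alpha> (f x))"
  unfolding monomial_def by (auto intro!: continuous_intros)

lemma fourier:
  fixes g :: "complex ^ 'n \<Rightarrow> complex"
  assumes gd: "good g R" and R: "R > 0" and z: "z \<in> Pc (R/2)"
  shows "Iint js0 (\<lambda>th. g (rot th z) * (\<Prod>i\<in>UNIV. cnj (E (th $ i)) ^ \<beta> i)) 0 = coef g R \<beta> * monomial \<beta> z"
proof -
  obtain B where B0: "B \<ge> 0" and B: "\<And>w. w \<in> Pc R \<Longrightarrow> norm (g w) \<le> B"
    using good_bound[OF gd] by blast
  have PcR: "Pc (R/2) \<subseteq> Pc R" using R by (rule Pc_half)
  define C where "C th = (\<Prod>i\<in>UNIV. cnj (E (th $ i)) ^ \<beta> i)" for th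
  define G where "G N th = (\<Sum>\<alpha>\<in>mbox N. coef g R \<alpha> * monomial \<alpha> (rot th z)) * C th" for N th
  have normC: "norm (C th) = 1" for th
    by (simp add: C_def prod_norm[symmetric] norm_power)
  have gcont: "continuous_on UNIV (\<lambda>th. g (rot th z))"
    by (rule continuous_on_compose2[of "Pc R" g]) (use gd rot_Pc z PcR in \<open>auto simp: good_def intro!: continuous_intros\<close>)
  have contG: "continuous_on UNIV (G N)" for N
    unfolding G_def C_def by (auto intro!: continuous_intros)
  have contL: "continuous_on UNIV (\<lambda>th. g (rot th z) * C th)"
    unfolding C_def using gcont by (auto intro!: continuous_intros)
  have bndG: "norm (G N th) \<le> B * 2 ^ CARD('n)" for N th
    unfolding G_def norm_mult normC using partial_bound[OF gd R B B0 rot_Pc[OF z]] by simp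
  have limG: "(\<lambda>N. G N th) \<longlonglongrightarrow> g (rot th z) * C th" for th
    unfolding G_def by (intro tendsto_mult_right expansion[OF gd R rot_Pc[OF z]])
  have lim1: "(\<lambda>N. Iint js0 (G N) 0) \<longlonglongrightarrow> Iint js0 (\<lambda>th. g (rot th z) * C th) 0"
    by (rule Iint_tendsto[OF contG contL bndG limG])
  have eqG: "Iint js0 (G N) 0 = (if \<beta> \<in> mbox N then coef g R \<beta> * monomial \<beta> z else 0)" for N
  proof -
    have "G N = (\<lambda>th. \<Sum>\<alpha>\<in>mbox N. (coef g R \<alpha> * monomial \<alpha> z) * (\<Prod>i\<in>UNIV. E (th $ i) ^ \<alpha> i * cnj (E (th $ i)) ^ \<beta> i))"
      by (rule ext) (simp add: G_def C_def monomial_rot sum_distrib_right sum_distrib_left prod.distrib mult_ac)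
    then have "Iint js0 (G N) 0 = (\<Sum>\<alpha>\<in>mbox N. Iint js0 (\<lambda>th. (coef g R \<alpha> * monomial \<alpha> z) * (\<Prod>i\<in>UNIV. E (th $ i) ^ \<alpha> i * cnj (E (th $ i)) ^ \<beta> i)) 0)"
      by (simp add: Iint_sum continuous_intros)
    also have "\<dots> = (\<Sum>\<alpha>\<in>mbox N. (coef g R \<alpha> * monomial \<alpha> z) * (if \<alpha> = \<beta> then 1 else 0))"
      by (simp add: Iint_mult_const Iint_orth)
    also have "\<dots> = (if \<beta> \<in> mbox N then coef g R \<beta> * monomial \<beta> z else 0)"
      by (simp add: if_distrib[of "\<lambda>x. _ * x"] cong: if_cong)
    finally show ?thesis .
  qed
  have ev: "eventually (\<lambda>N. Iint js0 (G N) 0 = coef g R \<beta> * monomial \<beta> z) sequentially"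
  proof (rule eventually_sequentiallyI[of "Max (range \<beta>)"])
    fix N assume "Max (range \<beta>) \<le> N"
    moreover have "\<beta> i \<le> Max (range \<beta>)" for i by (rule Max_ge) auto
    ultimately have "\<beta> \<in> mbox N" unfolding mem_mbox using le_trans by blast
    then show "Iint js0 (G N) 0 = coef g R \<beta> * monomial \<beta> z" by (simp add: eqG)
  qed
  have lim2: "(\<lambda>N. Iint js0 (G N) 0) \<longlonglongrightarrow> coef g R \<beta> * monomial \<beta> z"
    by (rule tendsto_eventually[OF ev])
  from LIMSEQ_unique[OF lim1 lim2] show ?thesis by (simp add: C_def)
qed

lemma coef_est:
  fixes g :: "complex ^ 'n \<Rightarrow> complex"
  assumes gd: "good g R" and R: "R > 0" and z: "z \<in> Pc (R/2)"
    and D: "\<And>th. norm (g (rot th z)) \<le> D"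
  shows "norm (coef g R \<beta> * monomial \<beta> z) \<le> D"
proof -
  have PcR: "Pc (R/2) \<subseteq> Pc R" using R by (rule Pc_half)
  have gcont: "continuous_on UNIV (\<lambda>th. g (rot th z))"
    by (rule continuous_on_compose2[of "Pc R" g]) (use gd rot_Pc z PcR in \<open>auto simp: good_def intro!: continuous_intros\<close>)
  have "norm (Iint js0 (\<lambda>th. g (rot th z) * (\<Prod>i\<in>UNIV. cnj (E (th $ i)) ^ \<beta> i)) 0) \<le> D"
  proof (rule Iint_bound)
    show "continuous_on UNIV (\<lambda>th. g (rot th z) * (\<Prod>i\<in>UNIV. cnj (E (th $ i)) ^ \<beta> i))"
      using gcont by (auto intro!: continuous_intros)
    fix th
    show "norm (g (rot th z) * (\<Prod>i\<in>UNIV. cnj (E (th $ i)) ^ \<beta> i)) \<le> D"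
      using D[of th] by (simp add: norm_mult prod_norm[symmetric] norm_power)
  qed
  then show ?thesis using fourier[OF gd R z] by simp
qed

lemma dickson_gen:
  fixes J :: "'n set"
  assumes "finite J"
  shows "\<exists>M. finite M \<and> M \<subseteq> A \<and> (\<forall>\<alpha>\<in>A. \<exists>\<beta>\<in>M. \<forall>i\<in>J. \<beta> i \<le> (\<alpha> i :: nat))"
  using assms
proof (induction J arbitrary: A rule: finite_induct)
  case empty
  show ?case
  proof (cases "A = {}")
    case True then show ?thesis by auto
  next
    case False
    then obtain a where "a \<in> A" by auto
    then show ?thesis by (intro exI[of _ "{a}"]) auto
  qed
next
  case (insert j J)
  obtain M0 where M0: "finite M0" "M0 \<subseteq> A" "\<forall>\<alpha>\<in>A. \<exists>\<beta>\<in>M0. \<forall>i\<in>J. \<beta> i \<le> \<alpha> i"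
    using insert.IH[of A] by blast
  have "\<forall>v. \<exists>Mv. finite Mv \<and> Mv \<subseteq> {\<alpha>\<in>A. \<alpha> j = v} \<and> (\<forall>\<alpha>\<in>{\<alpha>\<in>A. \<alpha> j = v}. \<exists>\<beta>\<in>Mv. \<forall>i\<in>J. \<beta> i \<le> \<alpha> i)"
  proof
    fix v show "\<exists>Mv. finite Mv \<and> Mv \<subseteq> {\<alpha>\<in>A. \<alpha> j = v} \<and> (\<forall>\<alpha>\<in>{\<alpha>\<in>A. \<alpha> j = v}. \<exists>\<beta>\<in>Mv. \<forall>i\<in>J. \<beta> i \<le> \<alpha> i)"
      by (rule insert.IH)
  qed
  from choice[OF this] obtain Mf where Mf0: "\<forall>v. finite (Mf v) \<and> Mf v \<subseteq> {\<alpha>\<in>A. \<alpha> j = v} \<and>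
      (\<forall>\<alpha>\<in>{\<alpha>\<in>A. \<alpha> j = v}. \<exists>\<beta>\<in>Mf v. \<forall>i\<in>J. \<beta> i \<le> \<alpha> i)"
    by blast
  have Mf: "\<And>v. finite (Mf v)" "\<And>v. Mf v \<subseteq> {\<alpha>\<in>A. \<alpha> j = v}"
      "\<And>v. \<forall>\<alpha>\<in>{\<alpha>\<in>A. \<alpha> j = v}. \<exists>\<beta>\<in>Mf v. \<forall>i\<in>J. \<beta> i \<le> \<alpha> i"
    using Mf0 by simp_all
  define Nn where "Nn = Max (insert 0 ((\<lambda>\<beta>. \<beta> j) ` M0))"
  have Nn: "\<beta> j \<le> Nn" if "\<beta> \<in> M0" for \<beta>
    unfolding Nn_def using M0(1) that by (intro Max_ge) auto
  define M where "M = M0 \<union> (\<Union>v\<in>{..<Nn}. Mf v)"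
  have "finite M" unfolding M_def using M0(1) Mf(1) by auto
  moreover have "M \<subseteq> A" unfolding M_def using M0(2) Mf(2) by blast
  moreover have "\<forall>\<alpha>\<in>A. \<exists>\<beta>\<in>M. \<forall>i\<in>insert j J. \<beta> i \<le> \<alpha> i"
  proof
    fix \<alpha> assume a: "\<alpha> \<in> A"
    then obtain \<beta> where b: "\<beta> \<in> M0" "\<forall>i\<in>J. \<beta> i \<le> \<alpha> i" using M0(3) by blast
    show "\<exists>\<beta>\<in>M. \<forall>i\<in>insert j J. \<beta> i \<le> \<alpha> i"
    proof (cases "\<beta> j \<le> \<alpha> j")
      case True
      then show ?thesis using b unfolding M_def by blast
    next
      case False
      then have lt: "\<alpha> j < Nn" using Nn[OF b(1)] by linarith
      have "\<alpha> \<in> {\<alpha>'\<in>A. \<alpha>' j = \<alpha> j}" using a by simp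
      then obtain \<beta>' where b': "\<beta>' \<in> Mf (\<alpha> j)" "\<forall>i\<in>J. \<beta>' i \<le> \<alpha> i"
        using Mf(3)[of "\<alpha> j"] by blast
      have "\<beta>' j = \<alpha> j" using Mf(2)[of "\<alpha> j"] b'(1) by blast
      moreover have "\<beta>' \<in> M" unfolding M_def using b'(1) lt by blast
      ultimately show ?thesis using b'(2) by (intro bexI[of _ \<beta>']) auto
    qed
  qed
  ultimately show ?case by blast
qed

lemma dickson:
  fixes A :: "('n::finite \<Rightarrow> nat) set"
  shows "\<exists>M. finite M \<and> M \<subseteq> A \<and> (\<forall>\<alpha>\<in>A. \<exists>\<beta>\<in>M. \<forall>i. \<beta> i \<le> \<alpha> i)"
  using dickson_gen[of "UNIV::'n set" A] by simp

lemma dom_sum: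
  fixes x :: "'n::finite \<Rightarrow> real"
  assumes x: "\<And>i. 0 \<le> x i" "\<And>i. x i \<le> 1/2"
  shows "(\<Sum>\<alpha>\<in>{\<alpha>\<in>mbox N. \<forall>i. \<beta> i \<le> \<alpha> i}. \<Prod>i\<in>UNIV. x i ^ \<alpha> i) \<le> 2 ^ CARD('n) * (\<Prod>i\<in>UNIV. x i ^ \<beta> i)"
proof -
  let ?S = "{\<alpha>\<in>mbox N. \<forall>i. \<beta> i \<le> \<alpha> i}"
  let ?d = "\<lambda>\<alpha>. \<lambda>i. \<alpha> i - \<beta> i"
  have fS: "finite ?S" by simp
  have "(\<Sum>\<alpha>\<in>?S. \<Prod>i\<in>UNIV. x i ^ \<alpha> i) = (\<Sum>\<alpha>\<in>?S. (\<Prod>i\<in>UNIV. x i ^ \<beta> i) * (\<Prod>i\<in>UNIV. x i ^ ?d \<alpha> i))"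
  proof (rule sum.cong[OF refl])
    fix \<alpha> assume "\<alpha> \<in> ?S"
    then have "\<alpha> i = \<beta> i + ?d \<alpha> i" for i by auto
    then have "x i ^ \<alpha> i = x i ^ \<beta> i * x i ^ ?d \<alpha> i" for i by (metis power_add)
    then show "(\<Prod>i\<in>UNIV. x i ^ \<alpha> i) = (\<Prod>i\<in>UNIV. x i ^ \<beta> i) * (\<Prod>i\<in>UNIV. x i ^ ?d \<alpha> i)"
      by (simp add: prod.distrib)
  qed
  also have "\<dots> = (\<Prod>i\<in>UNIV. x i ^ \<beta> i) * (\<Sum>\<alpha>\<in>?S. \<Prod>i\<in>UNIV. x i ^ ?d \<alpha> i)"
    by (simp add: sum_distrib_left)
  also have "\<dots> \<le> (\<Prod>i\<in>UNIV. x i ^ \<beta> i) * (\<Sum>\<alpha>\<in>?S. \<Prod>i\<in>(UNIV::'n set). (1/2) ^ ?d \<alpha> i)"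
  proof (intro mult_left_mono sum_mono prod_mono conjI)
    fix \<alpha> i
    show "0 \<le> x i ^ ?d \<alpha> i" using x by simp
    show "x i ^ ?d \<alpha> i \<le> (1/2) ^ ?d \<alpha> i" using x by (intro power_mono) auto
  qed (use x in \<open>auto intro: prod_nonneg\<close>)
  finally have s1: "(\<Sum>\<alpha>\<in>?S. \<Prod>i\<in>UNIV. x i ^ \<alpha> i) \<le> (\<Prod>i\<in>UNIV. x i ^ \<beta> i) * (\<Sum>\<alpha>\<in>?S. \<Prod>i\<in>(UNIV::'n set). (1/2) ^ ?d \<alpha> i)" .
  have "(\<Sum>\<alpha>\<in>?S. \<Prod>i\<in>(UNIV::'n set). (1/2::real) ^ ?d \<alpha> i) = (\<Sum>\<gamma>\<in>?d ` ?S. \<Prod>i\<in>(UNIV::'n set). (1/2) ^ \<gamma> i)"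
  proof (rule sum.reindex_cong[symmetric])
    show "inj_on ?d ?S"
    proof (rule inj_onI)
      fix a b assume ab: "a \<in> ?S" "b \<in> ?S" "?d a = ?d b"
      have "a i = b i" for i
      proof -
        have "a i - \<beta> i = b i - \<beta> i" using fun_cong[OF ab(3), of i] by simp
        moreover have "\<beta> i \<le> a i" "\<beta> i \<le> b i" using ab(1,2) by auto
        ultimately show ?thesis by linarith
      qed
      then show "a = b" by auto
    qed
  qed auto
  also have "\<dots> \<le> (\<Sum>\<gamma>\<in>mbox N. \<Prod>i\<in>(UNIV::'n set). (1/2::real) ^ \<gamma> i)"
  proof (rule sum_mono2)
    show "?d ` ?S \<subseteq> mbox N"
    proof
      fix \<gamma> assume "\<gamma> \<in> ?d ` ?S"
      then obtain \<alpha> where "\<alpha> \<in> ?S" "\<gamma> = ?d \<alpha>" by blast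
      then show "\<gamma> \<in> mbox N" unfolding mem_mbox using le_trans[OF diff_le_self] by auto
    qed
  qed (auto intro: prod_nonneg)
  also have "\<dots> \<le> 2 ^ CARD('n)" by (rule half_box_bound)
  finally have s2: "(\<Sum>\<alpha>\<in>?S. \<Prod>i\<in>(UNIV::'n set). (1/2::real) ^ ?d \<alpha> i) \<le> 2 ^ CARD('n)" .
  have P0: "(\<Prod>i\<in>UNIV. x i ^ \<beta> i) \<ge> 0" using x by (simp add: prod_nonneg)
  from s1 mult_left_mono[OF s2 P0] show ?thesis by (simp add: mult.commute)
qed

lemma upper_est:
  fixes g :: "complex ^ 'n \<Rightarrow> complex"
  assumes gd: "good g R" and R: "R > 0" and B: "\<And>w. w \<in> Pc R \<Longrightarrow> norm (g w) \<le> B" and B0: "B \<ge> 0"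
    and M: "finite M" and cov: "\<And>\<alpha>. coef g R \<alpha> \<noteq> 0 \<Longrightarrow> \<exists>\<beta>\<in>M. \<forall>i. \<beta> i \<le> \<alpha> i"
    and z: "z \<in> Pc (R/2)"
  shows "norm (g z) \<le> B * 2 ^ CARD('n) * (\<Sum>\<beta>\<in>M. \<Prod>i\<in>UNIV. (cmod (z $ i) / R) ^ \<beta> i)"
proof -
  define x where "x i = cmod (z $ i) / R" for i
  have x: "0 \<le> x i" "x i \<le> 1/2" for i
    using z R by (auto simp: x_def Pc_def field_simps)
  define T where "T \<alpha> = (\<Prod>i\<in>UNIV. x i ^ \<alpha> i)" for \<alpha>
  have T0: "T \<alpha> \<ge> 0" for \<alpha> unfolding T_def using x by (simp add: prod_nonneg)
  have bnd: "norm (\<Sum>\<alpha>\<in>mbox N. coef g R \<alpha> * monomial \<alpha> z) \<le> B * 2 ^ CARD('n) * (\<Sum>\<beta>\<in>M. T \<beta>)" for N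
  proof -
    have "norm (\<Sum>\<alpha>\<in>mbox N. coef g R \<alpha> * monomial \<alpha> z) \<le> (\<Sum>\<alpha>\<in>mbox N. norm (coef g R \<alpha> * monomial \<alpha> z))"
      by (rule norm_sum)
    also have "\<dots> \<le> (\<Sum>\<alpha>\<in>mbox N. \<Sum>\<beta>\<in>M. (if \<forall>i. \<beta> i \<le> \<alpha> i then B * T \<alpha> else 0))"
    proof (rule sum_mono)
      fix \<alpha> :: "'n \<Rightarrow> nat"
      have nn: "(\<Sum>\<beta>\<in>M. (if \<forall>i. \<beta> i \<le> \<alpha> i then B * T \<alpha> else 0)) \<ge> 0"
        using B0 T0 by (intro sum_nonneg) auto
      show "norm (coef g R \<alpha> * monomial \<alpha> z) \<le> (\<Sum>\<beta>\<in>M. (if \<forall>i. \<beta> i \<le> \<alpha> i then B * T \<alpha> else 0))"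
      proof (cases "coef g R \<alpha> = 0")
        case True then show ?thesis using nn by simp
      next
        case False
        then obtain \<beta>0 where b0: "\<beta>0 \<in> M" "\<forall>i. \<beta>0 i \<le> \<alpha> i" using cov by blast
        have "norm (coef g R \<alpha> * monomial \<alpha> z) \<le> B * T \<alpha>"
          unfolding T_def x_def by (rule coef_mono_bound[OF gd R B])
        also have "\<dots> = (if \<forall>i. \<beta>0 i \<le> \<alpha> i then B * T \<alpha> else 0)" using b0 by simp
        also have "\<dots> \<le> (\<Sum>\<beta>\<in>M. (if \<forall>i. \<beta> i \<le> \<alpha> i then B * T \<alpha> else 0))"
          by (rule member_le_sum[OF b0(1)]) (use B0 T0 M in auto)
        finally show ?thesis .
      qed
    qed
    also have "\<dots> = (\<Sum>\<beta>\<in>M. \<Sum>\<alpha>\<in>mbox N. (if \<forall>i. \<beta> i \<le> \<alpha> i then B * T \<alpha> else 0))"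
      by (rule sum.swap)
    also have "\<dots> = (\<Sum>\<beta>\<in>M. B * (\<Sum>\<alpha>\<in>{\<alpha>\<in>mbox N. \<forall>i. \<beta> i \<le> \<alpha> i}. T \<alpha>))"
      by (simp add: sum.inter_filter sum_distrib_left if_distrib[of "\<lambda>x. B * x"] cong: if_cong)
    also have "\<dots> \<le> (\<Sum>\<beta>\<in>M. B * (2 ^ CARD('n) * T \<beta>))"
      by (intro sum_mono mult_left_mono B0) (unfold T_def, rule dom_sum[OF x])
    also have "\<dots> = B * 2 ^ CARD('n) * (\<Sum>\<beta>\<in>M. T \<beta>)"
      by (simp add: sum_distrib_left sum_distrib_right mult_ac)
    finally show ?thesis .
  qed
  have "(\<lambda>N. norm (\<Sum>\<alpha>\<in>mbox N. coef g R \<alpha> * monomial \<alpha> z)) \<longlonglongrightarrow> norm (g z)"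
    by (intro tendsto_norm expansion[OF gd R z])
  then have "norm (g z) \<le> B * 2 ^ CARD('n) * (\<Sum>\<beta>\<in>M. T \<beta>)"
    by (rule LIMSEQ_le_const2) (use bnd in auto)
  then show ?thesis by (simp add: T_def x_def)
qed

definition ej :: "'n \<Rightarrow> complex \<Rightarrow> complex ^ 'n" where
  "ej j h = (\<chi> i. if i = j then h else 0)"

lemma bounded_linear_ej: "bounded_linear (ej j :: complex \<Rightarrow> complex ^ 'n)"
proof (rule bounded_linear_intro[where K=1])
  fix x y :: complex and r :: real
  show "ej j (x + y) = (ej j x + ej j y :: complex ^ 'n)" by (simp add: ej_def vec_eq_iff)
  show "ej j (r *\<^sub>R x) = (r *\<^sub>R ej j x :: complex ^ 'n)" by (simp add: ej_def vec_eq_iff)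
  have "norm (ej j x :: complex ^ 'n) \<le> (\<Sum>i\<in>UNIV. norm ((ej j x :: complex ^ 'n) $ i))"
    by (rule norm_le_l1_vec)
  also have "\<dots> = norm x" by (simp add: ej_def if_distrib cong: if_cong)
  finally show "norm (ej j x :: complex ^ 'n) \<le> norm x * 1" by simp
qed

lemma upd_ej: "upd w j z = upd w j 0 + ej j z"
  by (simp add: ej_def vec_eq_iff)

lemma ej_scale: "ej j h = h *s ej j 1"
  by (simp add: ej_def vec_eq_iff)

lemma holo_good:
  fixes g :: "complex ^ 'n \<Rightarrow> complex"
  assumes h: "holo_on V g" and sub: "Pc R \<subseteq> V"
  shows "good g R"
proof -
  have cont: "continuous_on V g"
  proof (rule continuous_at_imp_continuous_on, rule ballI)
    fix z assume "z \<in> V"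
    then obtain L where "(g has_derivative L) (at z)" using h unfolding holo_on_def by blast
    then show "isCont g z" by (rule has_derivative_continuous)
  qed
  have hol: "(\<lambda>\<zeta>. g (upd w j \<zeta>)) holomorphic_on ball 0 R" if w: "w \<in> Pc R" for w j
  proof -
    have "\<exists>f'. ((\<lambda>\<zeta>. g (upd w j \<zeta>)) has_field_derivative f') (at \<zeta>)" if z: "\<zeta> \<in> ball 0 R" for \<zeta>
    proof -
      have "upd w j \<zeta> \<in> Pc R" using w z by (auto simp: Pc_def)
      then have "upd w j \<zeta> \<in> V" using sub by blast
      then obtain L where L: "(g has_derivative L) (at (upd w j \<zeta>))" "\<And>(c::complex) v. L (c *s v) = c * L v"
        using h unfolding holo_on_def by blast
      have d1: "((\<lambda>\<zeta>. upd w j \<zeta>) has_derivative ej j) (at \<zeta>)"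
      proof -
        have "((\<lambda>\<zeta>. upd w j 0 + ej j \<zeta>) has_derivative (\<lambda>h. 0 + ej j h)) (at \<zeta>)"
          by (intro has_derivative_add has_derivative_const bounded_linear.has_derivative[OF bounded_linear_ej] has_derivative_ident)
        then show ?thesis by (simp add: upd_ej[symmetric])
      qed
      have "((\<lambda>\<zeta>. g (upd w j \<zeta>)) has_derivative (\<lambda>h. L (ej j h))) (at \<zeta>)"
        using has_derivative_compose[OF d1 L(1)] by (simp add: o_def)
      moreover have "(\<lambda>h. L (ej j h)) = (*) (L (ej j 1))"
      proof
        fix x
        have "L (ej j x) = L (x *s ej j 1)" by (subst ej_scale[of j x]) (rule refl)
        then show "L (ej j x) = L (ej j 1) * x" by (simp add: L(2) mult.commute)
      qed
      ultimately show ?thesis unfolding has_field_derivative_def by auto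
    qed
    then show ?thesis by (simp add: holomorphic_on_open)
  qed
  show ?thesis unfolding good_def using continuous_on_subset[OF cont sub] hol by blast
qed

lemma elog_pos: "x > 0 \<Longrightarrow> elog x = ereal (ln x)"
  by (simp add: elog_def)

lemma elog_zero [simp]: "elog 0 = -\<infinity>"
  by (simp add: elog_def)

lemma cmul_minf: "c > 0 \<Longrightarrow> ereal c * -\<infinity> = -\<infinity>"
  by simp

lemma elog_transfer:
  fixes c C eps K S P :: real and v :: ereal
  assumes c: "c > 0" and eps: "eps > 0" and K: "K > 0" and S0: "S \<ge> 0" and P0: "P \<ge> 0"
    and lo: "eps * P \<le> S" and hi: "S \<le> K * P"
    and v1: "ereal c * elog S - ereal C \<le> v" and v2: "v \<le> ereal c * elog S + ereal C"
  shows "ereal c * elog P - ereal (C + c * (\<bar>ln eps\<bar> + \<bar>ln K\<bar>)) \<le> v \<and>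
         v \<le> ereal c * elog P + ereal (C + c * (\<bar>ln eps\<bar> + \<bar>ln K\<bar>))"
proof (cases "P = 0")
  case True
  then have "S = 0" using hi S0 by simp
  then have "v = -\<infinity>" using v2 c by simp
  then show ?thesis using True c by simp
next
  case False
  then have Pp: "P > 0" using P0 by simp
  have "eps * P > 0" using eps Pp by simp
  then have Sp: "S > 0" using lo by linarith
  have "ln (eps * P) \<le> ln S" using lo \<open>eps * P > 0\<close> Sp by simp
  then have l1: "ln eps + ln P \<le> ln S" using eps Pp by (simp add: ln_mult)
  have "K * P > 0" using K Pp by simp
  have "ln S \<le> ln (K * P)" using hi \<open>K * P > 0\<close> Sp by simp
  then have l2: "ln S \<le> ln K + ln P" using K Pp by (simp add: ln_mult)
  have e1: "- \<bar>ln eps\<bar> \<le> ln eps" by simp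
  have e2: "ln K \<le> \<bar>ln K\<bar>" by simp
  have "c * (ln P - \<bar>ln eps\<bar>) \<le> c * ln S"
    by (rule mult_left_mono) (use l1 e1 c in auto)
  moreover have "c * ln S \<le> c * (ln P + \<bar>ln K\<bar>)"
    by (rule mult_left_mono) (use l2 e2 c in auto)
  moreover have "c * \<bar>ln K\<bar> \<ge> 0" "c * \<bar>ln eps\<bar> \<ge> 0" using c by simp_all
  ultimately have a: "c * ln P - (C + c * (\<bar>ln eps\<bar> + \<bar>ln K\<bar>)) \<le> c * ln S - C"
    and b: "c * ln S + C \<le> c * ln P + (C + c * (\<bar>ln eps\<bar> + \<bar>ln K\<bar>))"
    by (simp_all add: algebra_simps)
  have v1': "ereal (c * ln S - C) \<le> v" using v1 Sp by (simp add: elog_pos)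
  have v2': "v \<le> ereal (c * ln S + C)" using v2 Sp by (simp add: elog_pos)
  show ?thesis
    using order_trans[OF _ v1', of "ereal (c * ln P - (C + c * (\<bar>ln eps\<bar> + \<bar>ln K\<bar>)))"]
          order_trans[OF v2', of "ereal (c * ln P + (C + c * (\<bar>ln eps\<bar> + \<bar>ln K\<bar>)))"] a b Pp
    by (simp add: elog_pos)
qed

lemma toric_ratio:
  fixes c C Sw Sz :: real
  assumes c: "c > 0" and Sw: "Sw \<ge> 0" and Sz: "Sz \<ge> 0"
    and le: "ereal c * elog Sw - ereal C \<le> ereal c * elog Sz + ereal C"
  shows "Sw \<le> exp (2 * C / c) * Sz"
proof (cases "Sw = 0")
  case True then show ?thesis using Sz by simp
next
  case False
  then have Swp: "Sw > 0" using Sw by simp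
  show ?thesis
  proof (cases "Sz = 0")
    case True
    then show ?thesis using le Swp c by (simp add: elog_pos)
  next
    case False
    then have Szp: "Sz > 0" using Sz by simp
    have "c * ln Sw - C \<le> c * ln Sz + C" using le Swp Szp by (simp add: elog_pos)
    then have "ln Sw \<le> ln Sz + 2 * C / c" using c by (simp add: field_simps)
    then have "exp (ln Sw) \<le> exp (ln Sz + 2 * C / c)" by simp
    then show ?thesis using Swp Szp by (simp add: exp_add mult.commute)
  qed
qed

lemma sum_list_le_len:
  fixes f :: "'a \<Rightarrow> real"
  shows "(\<And>g. g \<in> set gs \<Longrightarrow> f g \<le> X) \<Longrightarrow> sum_list (map f gs) \<le> real (length gs) * X"
  by (induction gs) (auto simp: algebra_simps add_mono)

lemma member_le_sum_list':
  fixes f :: "'a \<Rightarrow> real"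
  shows "(\<And>g. g \<in> set gs \<Longrightarrow> 0 \<le> f g) \<Longrightarrow> g \<in> set gs \<Longrightarrow> f g \<le> sum_list (map f gs)"
proof (induction gs)
  case Nil then show ?case by simp
next
  case (Cons a gs)
  have "0 \<le> sum_list (map f gs)" using Cons.prems(1) by (intro sum_list_nonneg) auto
  moreover have "0 \<le> f a" using Cons.prems(1) by simp
  show ?case
  proof (cases "g = a")
    case True then show ?thesis using \<open>0 \<le> sum_list (map f gs)\<close> by simp
  next
    case False
    then have "g \<in> set gs" using Cons.prems(2) by simp
    then have "f g \<le> sum_list (map f gs)" using Cons.IH Cons.prems(1) by simp
    then show ?thesis using \<open>0 \<le> f a\<close> by simp
  qed
qed

lemma list_bound:
  fixes gs :: "(complex ^ 'n \<Rightarrow> complex) list"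
  shows "(\<forall>g\<in>set gs. good g R) \<Longrightarrow> \<exists>B\<ge>0. \<forall>g\<in>set gs. \<forall>w\<in>Pc R. norm (g w) \<le> B"
proof (induction gs)
  case Nil then show ?case by auto
next
  case (Cons a gs)
  then obtain B where B: "B \<ge> 0" "\<forall>g\<in>set gs. \<forall>w\<in>Pc R. norm (g w) \<le> B" by auto
  obtain Ba where Ba: "Ba \<ge> 0" "\<And>w. w \<in> Pc R \<Longrightarrow> norm (a w) \<le> Ba"
    using good_bound[of a R] Cons.prems by auto
  show ?case
    by (rule exI[of _ "max B Ba"]) (use B Ba in \<open>fastforce intro: le_max_iff_disj[THEN iffD2]\<close>)
qed

lemma norm_rot: "norm (rot th z) = norm z"
  by (simp add: norm_vec_def norm_mult)

lemma rot_toric: "rot th z = (\<chi> i. cis (2 * pi * th $ i) * z $ i)"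
  by (simp add: rot_def E_def cis_conv_exp mult_ac)

lemma monomial_zero [simp]: "monomial (\<lambda>_. 0) z = 1"
  by (simp add: monomial_def)

lemma ereal0_mult: "ereal 0 * (x::ereal) = 0"
  by (cases x) (simp_all add: zero_ereal_def)

theorem proposition3p1:
  fixes \<phi> :: "complex ^ 'n \<Rightarrow> ereal"
  assumes "psh unit_polydisk \<phi>"
    and "toric unit_polydisk \<phi>"
    and "analytic_sing unit_polydisk \<phi>"
  shows "\<exists>(c::real) (\<alpha>s :: ('n \<Rightarrow> nat) list). c > 0 \<and>
           (\<exists>r>0. \<exists>C::real. \<forall>z\<in>ball 0 r.
              ereal (c/2) * elog (\<Sum>\<alpha>\<leftarrow>\<alpha>s. (cmod (monomial \<alpha> z))\<^sup>2) - ereal C \<le> \<phi> z \<and>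
              \<phi> z \<le> ereal (c/2) * elog (\<Sum>\<alpha>\<leftarrow>\<alpha>s. (cmod (monomial \<alpha> z))\<^sup>2) + ereal C)"
proof -
  have "(0::complex^'n) \<in> unit_polydisk" by (simp add: unit_polydisk_def)
  then have "\<exists>V. open V \<and> 0 \<in> V \<and> V \<subseteq> unit_polydisk \<and>
        (\<exists>c::real. c \<ge> 0 \<and> (\<exists>gs :: (complex ^ 'n \<Rightarrow> complex) list.
           (\<forall>g\<in>set gs. holo_on V g) \<and>
           (\<exists>C::real. \<forall>z\<in>V.
              ereal c * elog (\<Sum>g\<leftarrow>gs. (cmod (g z))\<^sup>2) - ereal C \<le> \<phi> z \<and>
              \<phi> z \<le> ereal c * elog (\<Sum>g\<leftarrow>gs. (cmod (g z))\<^sup>2) + ereal C)))"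
    using assms(3) unfolding analytic_sing_def by blast
  then obtain V c gs C where V: "open V" "0 \<in> V" "V \<subseteq> unit_polydisk" and c0: "c \<ge> 0"
    and hg: "\<forall>g\<in>set gs. holo_on V g"
    and bnd: "\<And>z. z \<in> V \<Longrightarrow> ereal c * elog (\<Sum>g\<leftarrow>gs. (cmod (g z))\<^sup>2) - ereal C \<le> \<phi> z \<and>
              \<phi> z \<le> ereal c * elog (\<Sum>g\<leftarrow>gs. (cmod (g z))\<^sup>2) + ereal C"
    by blast
  obtain r0 where r0: "r0 > 0" "ball 0 r0 \<subseteq> V"
    using V(1,2) open_contains_ball by blast
  define S where "S z = (\<Sum>g\<leftarrow>gs. (cmod (g z))\<^sup>2)" for z
  have S0: "S z \<ge> 0" for z unfolding S_def by (intro sum_list_nonneg) auto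
  show ?thesis
  proof (cases "c = 0")
    case True
    have "\<forall>z\<in>ball 0 r0.
              ereal (1/2) * elog (\<Sum>\<alpha>\<leftarrow>[\<lambda>_. 0]. (cmod (monomial \<alpha> z))\<^sup>2) - ereal C \<le> \<phi> z \<and>
              \<phi> z \<le> ereal (1/2) * elog (\<Sum>\<alpha>\<leftarrow>[\<lambda>_. 0]. (cmod (monomial \<alpha> z))\<^sup>2) + ereal C"
    proof
      fix z :: "complex ^ 'n" assume "z \<in> ball 0 r0"
      then have "z \<in> V" using r0 by blast
      from bnd[OF this] True show "ereal (1/2) * elog (\<Sum>\<alpha>\<leftarrow>[\<lambda>_. 0]. (cmod (monomial \<alpha> z))\<^sup>2) - ereal C \<le> \<phi> z \<and>
              \<phi> z \<le> ereal (1/2) * elog (\<Sum>\<alpha>\<leftarrow>[\<lambda>_. 0]. (cmod (monomial \<alpha> z))\<^sup>2) + ereal C"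
        by (simp add: ereal0_mult elog_def)
    qed
    then show ?thesis using r0(1)
      by (intro exI[of _ "1::real"] exI[of _ "[\<lambda>_. 0]"]) auto
  next
    case False
    then have c: "c > 0" using c0 by simp
    define n where "n = real CARD('n)"
    define R where "R = r0 / (n + 1)"
    have n0: "n \<ge> 0" unfolding n_def by simp
    have R0: "R > 0" unfolding R_def using r0 n0 by simp
    have PcV: "Pc R \<subseteq> V"
    proof
      fix z :: "complex ^ 'n" assume z: "z \<in> Pc R"
      have "(\<Sum>i\<in>UNIV. cmod (z $ i)) \<le> of_nat (card (UNIV :: 'n set)) * R"
        by (rule sum_bounded_above) (use z in \<open>simp add: Pc_def\<close>)
      then have "norm z \<le> n * R" using norm_le_l1_vec[of z] unfolding n_def by linarith
      also have "\<dots> < r0" unfolding R_def using r0 n0 by (simp add: field_simps)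
      finally show "z \<in> V" using r0 by auto
    qed
    have gd: "\<forall>g\<in>set gs. good g R" using hg holo_good[OF _ PcV] by blast
    obtain B where B0: "B \<ge> 0" and B: "\<forall>g\<in>set gs. \<forall>w\<in>Pc R. norm (g w) \<le> B"
      using list_bound[OF gd] by blast
    define A where "A = {\<alpha>. \<exists>g\<in>set gs. coef g R \<alpha> \<noteq> 0}"
    obtain M where M: "finite M" "M \<subseteq> A" and cov: "\<forall>\<alpha>\<in>A. \<exists>\<beta>\<in>M. \<forall>i. \<beta> i \<le> \<alpha> i"
      using dickson[of A] by blast
    obtain \<alpha>s where as: "distinct \<alpha>s" "set \<alpha>s = M"
      using finite_distinct_list[OF M(1)] by blast
    define P where "P z = (\<Sum>\<beta>\<in>M. (cmod (monomial \<beta> z))\<^sup>2)" for z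
    have Plist: "(\<Sum>\<alpha>\<leftarrow>\<alpha>s. (cmod (monomial \<alpha> z))\<^sup>2) = P z" for z
      unfolding P_def using as by (simp add: sum_list_distinct_conv_sum_set)
    have P0: "P z \<ge> 0" for z unfolding P_def by (intro sum_nonneg) auto
    define Q where "Q = (\<Sum>\<beta>\<in>M. \<Prod>i\<in>UNIV. (1 / R) ^ \<beta> i)"
    define K1 where "K1 = (B * 2 ^ CARD('n) * Q)\<^sup>2 * real (card M)"
    define K where "K = real (length gs) * K1 + 1"
    have K: "K > 0" unfolding K_def K1_def by (simp add: add_nonneg_pos)
    have upper: "S z \<le> K * P z" if z: "z \<in> Pc (R/2)" for z
    proof -
      define T where "T = (\<Sum>\<beta>\<in>M. norm (monomial \<beta> z))"
      have T0: "T \<ge> 0" unfolding T_def by (intro sum_nonneg) auto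
      have Q0: "Q \<ge> 0" unfolding Q_def using R0 by (intro sum_nonneg prod_nonneg) auto
      have gb: "(norm (g z))\<^sup>2 \<le> K1 * P z" if g: "g \<in> set gs" for g
      proof -
        have covg: "\<exists>\<beta>\<in>M. \<forall>i. \<beta> i \<le> \<alpha> i" if "coef g R \<alpha> \<noteq> 0" for \<alpha>
          using cov that g unfolding A_def by blast
        have "norm (g z) \<le> B * 2 ^ CARD('n) * (\<Sum>\<beta>\<in>M. \<Prod>i\<in>UNIV. (cmod (z $ i) / R) ^ \<beta> i)"
          by (rule upper_est[OF _ R0 _ B0 M(1) covg z]) (use gd B g in auto)
        also have "(\<Sum>\<beta>\<in>M. \<Prod>i\<in>UNIV. (cmod (z $ i) / R) ^ \<beta> i) \<le> Q * T"
        proof -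
          have "(\<Sum>\<beta>\<in>M. \<Prod>i\<in>UNIV. (cmod (z $ i) / R) ^ \<beta> i)
              = (\<Sum>\<beta>\<in>M. (\<Prod>i\<in>UNIV. (1 / R) ^ \<beta> i) * norm (monomial \<beta> z))"
            unfolding norm_monomial prod.distrib[symmetric] power_mult_distrib[symmetric] by simp
          also have "\<dots> \<le> (\<Sum>\<beta>\<in>M. Q * norm (monomial \<beta> z))"
          proof (rule sum_mono, rule mult_right_mono)
            fix \<beta> assume "\<beta> \<in> M"
            then show "(\<Prod>i\<in>UNIV. (1 / R) ^ \<beta> i) \<le> Q"
              unfolding Q_def using M(1) R0 by (intro member_le_sum) (auto intro: prod_nonneg)
          qed simp
          also have "\<dots> = Q * T" unfolding T_def by (simp add: sum_distrib_left)
          finally show ?thesis .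
        qed
        then have "B * 2 ^ CARD('n) * (\<Sum>\<beta>\<in>M. \<Prod>i\<in>UNIV. (cmod (z $ i) / R) ^ \<beta> i) \<le> B * 2 ^ CARD('n) * (Q * T)"
          by (intro mult_left_mono) (use B0 in auto)
        finally have ng: "norm (g z) \<le> B * 2 ^ CARD('n) * Q * T" by (simp add: mult.assoc)
        have "(norm (g z))\<^sup>2 \<le> (B * 2 ^ CARD('n) * Q * T)\<^sup>2"
          by (rule power_mono[OF ng]) simp
        also have "\<dots> = (B * 2 ^ CARD('n) * Q)\<^sup>2 * T\<^sup>2" by (simp add: power_mult_distrib)
        also have "T\<^sup>2 \<le> (\<Sum>\<beta>\<in>M. (norm (monomial \<beta> z))\<^sup>2) * real (card M)"
          unfolding T_def by (rule sum_squared_le_sum_of_squares)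
        then have "(B * 2 ^ CARD('n) * Q)\<^sup>2 * T\<^sup>2 \<le> (B * 2 ^ CARD('n) * Q)\<^sup>2 * ((\<Sum>\<beta>\<in>M. (norm (monomial \<beta> z))\<^sup>2) * real (card M))"
          by (intro mult_left_mono) auto
        finally show ?thesis unfolding K1_def P_def by (simp add: mult_ac)
      qed
      have "S z \<le> real (length gs) * (K1 * P z)"
        unfolding S_def by (rule sum_list_le_len) (use gb in simp)
      also have "\<dots> \<le> K * P z" unfolding K_def using P0[of z] by (simp add: algebra_simps)
      finally show ?thesis .
    qed
    have "\<forall>\<beta>\<in>M. \<exists>g. g \<in> set gs \<and> coef g R \<beta> \<noteq> 0" using M(2) unfolding A_def by blast
    then obtain G where G: "\<And>\<beta>. \<beta> \<in> M \<Longrightarrow> G \<beta> \<in> set gs \<and> coef (G \<beta>) R \<beta> \<noteq> 0"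
      by metis
    define \<nu> where "\<nu> = (\<Sum>\<beta>\<in>M. 1 / (cmod (coef (G \<beta>) R \<beta>))\<^sup>2)"
    have \<nu>0: "\<nu> \<ge> 0" unfolding \<nu>_def by (intro sum_nonneg) auto
    define \<Lambda> where "\<Lambda> = exp (2 * C / c)"
    have \<Lambda>0: "\<Lambda> > 0" unfolding \<Lambda>_def by simp
    define eps where "eps = 1 / (\<Lambda> * \<nu> + 1)"
    have eps: "eps > 0" unfolding eps_def using \<Lambda>0 \<nu>0 by (simp add: add_nonneg_pos)
    define r where "r = min r0 (R/2)"
    have r: "r > 0" unfolding r_def using r0 R0 by simp
    have region: "z \<in> V" "z \<in> Pc (R/2)" "\<And>th. rot th z \<in> V" if z: "z \<in> ball 0 r" for z
    proof -
      have nz: "norm z < r" using z by simp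
      show "z \<in> V" using nz r0 unfolding r_def by auto
      show "rot th z \<in> V" for th using nz r0 norm_rot[of th z] unfolding r_def by auto
      have "cmod (z $ i) \<le> R/2" for i
        using Finite_Cartesian_Product.norm_nth_le[of z i] nz unfolding r_def by linarith
      then show "z \<in> Pc (R/2)" by (simp add: Pc_def)
    qed
    have lower: "eps * P z \<le> S z" if z: "z \<in> ball 0 r" for z
    proof -
      have zV: "z \<in> V" and zP: "z \<in> Pc (R/2)" and rotV: "\<And>th. rot th z \<in> V"
        using region[OF z] by auto
      have zU: "z \<in> unit_polydisk" using zV V(3) by blast
      have ratio: "S (rot th z) \<le> \<Lambda> * S z" for th
      proof -
        have "\<phi> (\<chi> i. cis ((\<lambda>i. 2 * pi * th $ i) i) * z $ i) = \<phi> z"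
        proof -
          have T: "\<forall>\<theta>::'n \<Rightarrow> real. \<forall>z\<in>unit_polydisk. \<phi> (\<chi> i. cis (\<theta> i) * z $ i) = \<phi> z"
            using assms(2) unfolding toric_def .
          show ?thesis using T[rule_format, OF zU, of "\<lambda>i. 2 * pi * th $ i"] by simp
        qed
        then have eq: "\<phi> (rot th z) = \<phi> z" by (simp add: rot_toric)
        have "ereal c * elog (S (rot th z)) - ereal C \<le> \<phi> (rot th z)"
          using bnd[OF rotV[of th]] by (simp add: S_def)
        also have "\<dots> = \<phi> z" by (rule eq)
        also have "\<dots> \<le> ereal c * elog (S z) + ereal C"
          using bnd[OF zV] by (simp add: S_def)
        finally have "ereal c * elog (S (rot th z)) - ereal C \<le> ereal c * elog (S z) + ereal C" .
        from toric_ratio[OF c S0 S0 this] show ?thesis by (simp add: \<Lambda>_def)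
      qed
      have mb: "(cmod (monomial \<beta> z))\<^sup>2 \<le> \<Lambda> * S z * (1 / (cmod (coef (G \<beta>) R \<beta>))\<^sup>2)" if b: "\<beta> \<in> M" for \<beta>
      proof -
        let ?g = "G \<beta>"
        have g: "?g \<in> set gs" and cne: "coef ?g R \<beta> \<noteq> 0" using G[OF b] by auto
        have "norm (?g (rot th z)) \<le> sqrt (\<Lambda> * S z)" for th
        proof (rule real_le_rsqrt)
          have "(norm (?g (rot th z)))\<^sup>2 \<le> S (rot th z)"
            unfolding S_def by (rule member_le_sum_list'[OF _ g]) auto
          then show "(norm (?g (rot th z)))\<^sup>2 \<le> \<Lambda> * S z" using ratio[of th] by linarith
        qed
        then have "norm (coef ?g R \<beta> * monomial \<beta> z) \<le> sqrt (\<Lambda> * S z)"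
          by (intro coef_est[OF _ R0 zP]) (use gd g in auto)
        then have "(norm (coef ?g R \<beta> * monomial \<beta> z))\<^sup>2 \<le> (sqrt (\<Lambda> * S z))\<^sup>2"
          by (intro power_mono) auto
        also have "\<dots> = \<Lambda> * S z" using \<Lambda>0 S0[of z] by simp
        finally have "(cmod (coef ?g R \<beta>))\<^sup>2 * (cmod (monomial \<beta> z))\<^sup>2 \<le> \<Lambda> * S z"
          by (simp add: norm_mult power_mult_distrib)
        moreover have "(cmod (coef ?g R \<beta>))\<^sup>2 > 0" using cne by simp
        ultimately show ?thesis by (simp add: field_simps)
      qed
      have "P z \<le> (\<Sum>\<beta>\<in>M. \<Lambda> * S z * (1 / (cmod (coef (G \<beta>) R \<beta>))\<^sup>2))"
        unfolding P_def by (rule sum_mono) (rule mb)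
      also have "\<dots> = \<Lambda> * S z * \<nu>" unfolding \<nu>_def by (simp add: sum_distrib_left)
      finally have "P z \<le> \<Lambda> * \<nu> * S z" by (simp add: mult_ac)
      also have "\<dots> \<le> (\<Lambda> * \<nu> + 1) * S z" using S0[of z] by (simp add: algebra_simps)
      finally have "P z \<le> (\<Lambda> * \<nu> + 1) * S z" .
      moreover have "\<Lambda> * \<nu> + 1 > 0" using \<Lambda>0 \<nu>0 by (simp add: add_nonneg_pos)
      ultimately show ?thesis unfolding eps_def by (simp add: field_simps)
    qed
    define C' where "C' = C + c * (\<bar>ln eps\<bar> + \<bar>ln K\<bar>)"
    have main: "\<forall>z\<in>ball 0 r.
              ereal ((2 * c)/2) * elog (\<Sum>\<alpha>\<leftarrow>\<alpha>s. (cmod (monomial \<alpha> z))\<^sup>2) - ereal C' \<le> \<phi> z \<and>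
              \<phi> z \<le> ereal ((2 * c)/2) * elog (\<Sum>\<alpha>\<leftarrow>\<alpha>s. (cmod (monomial \<alpha> z))\<^sup>2) + ereal C'"
    proof
      fix z :: "complex ^ 'n" assume z: "z \<in> ball 0 r"
      have "ereal c * elog (P z) - ereal C' \<le> \<phi> z \<and> \<phi> z \<le> ereal c * elog (P z) + ereal C'"
        unfolding C'_def
        by (rule elog_transfer[OF c eps K S0 P0 lower[OF z] upper[OF region(2)[OF z]]])
           (use bnd[OF region(1)[OF z]] in \<open>simp_all add: S_def\<close>)
      then show "ereal ((2 * c)/2) * elog (\<Sum>\<alpha>\<leftarrow>\<alpha>s. (cmod (monomial \<alpha> z))\<^sup>2) - ereal C' \<le> \<phi> z \<and>
              \<phi> z \<le> ereal ((2 * c)/2) * elog (\<Sum>\<alpha>\<leftarrow>\<alpha>s. (cmod (monomial \<alpha> z))\<^sup>2) + ereal C'"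
        by (simp add: Plist)
    qed
    show ?thesis
    proof (intro exI conjI)
      show "0 < 2 * c" using c by simp
      show "r > 0" by (rule r)
    qed (rule main)
  qed
qed

end
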